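(* Let $N\ge2$ and consider the opinion process on the one-dimensional graph with vertices labelled $0,1,\dots,N$ (vertex $k$ corresponding to the point $k/N$), boundary vertices $0$ and $N$ with boundary opinions $T_-:=T_0$ and $T_+:=T_N$, internal vertices $1,\dots,N-1$, and edges $\{k,k+1\}$ for $k=1,\dots,N-1$ oriented from $k$ to $k+1$ together with the edge from $1$ to $0$. Let $\nu^O$ be its invariant measure and $C^N_{k,\ell}:=\mathbb E_{\nu^O}(O_kO_\ell)-\mathbb E_{\nu^O}(O_k)\mathbb E_{\nu^O}(O_\ell)$. Then for $0\le k\le\ell\le N$, $C^N_{k,\ell}\le\tilde C_{k,\ell}$, where $\tilde C_{k,\ell}=\frac{(T_+-T_-)^2}{N+1}\frac kN\left(1-\frac\ell N\right)$ if $k<\ell$, and $\tilde C_{k,k}=\frac{(T_+-T_-)^2}{N+1}\frac kN\left(1-\frac kN\right)+\frac{(T_+-T_-)^2}{2N(N+1)}$.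
   Context: Opinion process on a finite oriented graph $(\overline{\mathbb V},\overline E)$ with internal vertices $\mathbb V$, boundary vertices $\partial\mathbb V$, boundary edges oriented $ij$ with $i\in\mathbb V$, $j\in\partial\mathbb V$, and fixed boundary values $T_j>0$: the Markov process on $\mathbb R_+^{\overline{\mathbb V}}$ with $O_j\equiv T_j$ for $j\in\partial\mathbb V$ and generator $L^Of(O)=\sum_{ij\in\overline E}\int_0^1dv\,[f(H^O_{ij;v}O)-f(O)]$, where $(H^O_{ij;v}O)_\ell=vO_i+(1-v)O_j$ for $\ell\in\{i,j\}\cap\mathbb V$ and $(H^O_{ij;v}O)_\ell=O_\ell$ otherwise. That is, at rate 1 for each edge $ij$, a value uniform between $O_i$ and $O_j$ is drawn and adopted by the internal endpoints. It has a unique invariant probability measure $\nu^O$. *)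

theory Defs
  imports "HOL-Probability.Probability"
begin

definition opinion_space :: "nat \<Rightarrow> (nat \<Rightarrow> real) measure" where
  "opinion_space N = PiM {0..N} (\<lambda>_. borel)"

definition internal_vertices :: "nat \<Rightarrow> nat set" where
  "internal_vertices N = {1..N-1}"

definition opinion_edges :: "nat \<Rightarrow> (nat \<times> nat) set" where
  "opinion_edges N = insert (1, 0) {(k, Suc k) | k. 1 \<le> k \<and> k \<le> N - 1}"

definition opinion_update :: "nat \<Rightarrow> nat \<Rightarrow> nat \<Rightarrow> real \<Rightarrow> (nat \<Rightarrow> real) \<Rightarrow> (nat \<Rightarrow> real)" where
  "opinion_update N i j v x =
     (\<lambda>l. if l \<in> {i, j} \<inter> internal_vertices N then v * x i + (1 - v) * x j else x l)"

definition opinion_generator :: "nat \<Rightarrow> ((nat \<Rightarrow> real) \<Rightarrow> real) \<Rightarrow> (nat \<Rightarrow> real) \<Rightarrow> real" where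
  "opinion_generator N f x =
     (\<Sum>(i, j)\<in>opinion_edges N. LINT v:{0..1}|lborel. (f (opinion_update N i j v x) - f x))"

text \<open>Invariant probability measure of the process (bounded generator: invariance
  means the integral of L f vanishes for every bounded measurable f), concentrated on
  the state space nonneg configurations with fixed boundary values.\<close>
definition opinion_invariant :: "nat \<Rightarrow> real \<Rightarrow> real \<Rightarrow> (nat \<Rightarrow> real) measure \<Rightarrow> bool" where
  "opinion_invariant N Tm Tp \<nu> \<longleftrightarrow>
     prob_space \<nu> \<and> sets \<nu> = sets (opinion_space N) \<and>
     (AE x in \<nu>. x 0 = Tm \<and> x N = Tp \<and> (\<forall>k\<in>{0..N}. 0 \<le> x k)) \<and>
     (\<forall>f \<in> borel_measurable (opinion_space N). (\<exists>B. \<forall>x. \<bar>f x\<bar> \<le> B) \<longrightarrow>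
        (\<integral>x. opinion_generator N f x \<partial>\<nu>) = 0)"

definition opinion_cov :: "(nat \<Rightarrow> real) measure \<Rightarrow> nat \<Rightarrow> nat \<Rightarrow> real" where
  "opinion_cov \<nu> k l = (\<integral>x. x k * x l \<partial>\<nu>) - (\<integral>x. x k \<partial>\<nu>) * (\<integral>x. x l \<partial>\<nu>)"

definition C_tilde :: "nat \<Rightarrow> real \<Rightarrow> real \<Rightarrow> nat \<Rightarrow> nat \<Rightarrow> real" where
  "C_tilde N Tm Tp k l =
     (if k < l then (Tp - Tm)^2 / (real N + 1) * (real k / real N) * (1 - real l / real N)
      else (Tp - Tm)^2 / (real N + 1) * (real k / real N) * (1 - real k / real N)
           + (Tp - Tm)^2 / (2 * real N * (real N + 1)))"

end

theory Submission
  imports Defs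
begin

definition Eop :: "(nat \<Rightarrow> nat \<Rightarrow> real) \<Rightarrow> nat \<Rightarrow> nat \<Rightarrow> real" where
  "Eop S k l = (S l (k-1) + S l (k+1))/2 - S l k + (S k (l-1) + S k (l+1))/2 - S k l
     + (if l = k then (S (k-1) (k-1) - 2 * S (k-1) k + S k k)/3 + (S k k - 2 * S k (k+1) + S (k+1) (k+1))/3
        else if l = k+1 then - (S k k - 2 * S k l + S l l)/6 else 0)"

lemma Eop_lin: "Eop (\<lambda>a b. D a b - r * w a b) k l = Eop D k l - r * Eop w k l"
  unfolding Eop_def by (simp add: algebra_simps add_divide_distrib diff_divide_distrib)

lemma Eop_nonneg:
  assumes sym: "\<And>a b. F a b = F b a" and nn: "\<And>a b. a \<le> N \<Longrightarrow> b \<le> N \<Longrightarrow> 0 \<le> F a b"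
    and z: "F k l = 0" and kl: "1 \<le> k" "k \<le> l" "l \<le> N - 1"
  shows "0 \<le> Eop F k l"
proof -
  have N: "l + 1 \<le> N" "k + 1 \<le> N" using kl by auto
  have h1: "0 \<le> F l (k-1)" "0 \<le> F l (k+1)" "0 \<le> F k (l-1)" "0 \<le> F k (l+1)"
     "0 \<le> F (k-1) (k-1)" "0 \<le> F (k+1) (k+1)" "0 \<le> F k k" "0 \<le> F l l" "0 \<le> F k (k+1)" "0 \<le> F (k-1) k"
    using nn N kl by auto
  have z2: "F l k = 0" using z sym by metis
  consider "l = k" | "l = k+1" | "l \<noteq> k \<and> l \<noteq> k + 1" by blast
  then show ?thesis
  proof cases
    case 1
    have "F (k-1) k = F k (k-1)" using sym by metis
    then have "Eop F k l = F k (k-1)/3 + F k (k+1)/3 + F (k-1) (k-1)/3 + F (k+1) (k+1)/3"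
      using 1 z unfolding Eop_def by (simp add: field_simps)
    then show ?thesis using 1 h1 by simp
  next
    case 2
    have "F l (k+1) = F l l" "F k (l-1) = F k k" using 2 by auto
    then show ?thesis using 2 h1 z z2 unfolding Eop_def by (simp add: field_simps)
  next
    case 3
    then show ?thesis using h1 z z2 unfolding Eop_def by simp
  qed
qed

definition wfun :: "nat \<Rightarrow> nat \<Rightarrow> nat \<Rightarrow> real" where
  "wfun N a b = real a * (real N - real a) + real b * (real N - real b) + 1"

lemma wfun_pos: "a \<le> N \<Longrightarrow> b \<le> N \<Longrightarrow> 0 < wfun N a b"
  unfolding wfun_def by (simp add: add_nonneg_pos)

lemma Eop_w: assumes "1 \<le> k" "k \<le> l" shows "Eop (wfun N) k l < 0"
proof -
  obtain k' where k': "k = Suc k'" using assms by (cases k) auto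
  obtain l' where l': "l = Suc l'" using assms by (cases l) auto
  consider "l = k" | "l = k+1" | "l \<noteq> k \<and> l \<noteq> k + 1" by blast
  then show ?thesis
  proof cases
    case 1 then show ?thesis unfolding Eop_def wfun_def using k' l' by (simp add: algebra_simps)
  next
    case 2 then show ?thesis unfolding Eop_def wfun_def using k' l' by (simp add: algebra_simps)
  next
    case 3 then show ?thesis unfolding Eop_def wfun_def using k' l' by (simp add: algebra_simps)
  qed
qed


lemma maxprin:
  fixes D :: "nat \<Rightarrow> nat \<Rightarrow> real"
  assumes sym: "\<And>a b. D a b = D b a"
    and bd: "\<And>a b. a \<le> N \<Longrightarrow> b \<le> N \<Longrightarrow> a = 0 \<or> a = N \<or> b = 0 \<or> b = N \<Longrightarrow> 0 \<le> D a b"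
    and eq: "\<And>k l. 1 \<le> k \<Longrightarrow> k \<le> l \<Longrightarrow> l \<le> N - 1 \<Longrightarrow> Eop D k l = 0"
    and ab: "a \<le> N" "b \<le> N"
  shows "0 \<le> D a b"
proof (rule ccontr)
  assume neg: "\<not> 0 \<le> D a b"
  define P where "P = {0..N} \<times> {0..N}"
  define R where "R = (\<lambda>(x,y). D x y / wfun N x y) ` P"
  define r where "r = Min R"
  have finR: "finite R" "R \<noteq> {}" unfolding R_def P_def by auto
  have wsym: "\<And>x y. wfun N x y = wfun N y x" unfolding wfun_def by simp
  have "D a b / wfun N a b \<in> R" unfolding R_def P_def using ab by force
  hence "r \<le> D a b / wfun N a b" unfolding r_def using finR by simp
  moreover have "D a b / wfun N a b < 0" using neg wfun_pos[OF ab] by (simp add: divide_neg_pos)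
  ultimately have rneg: "r < 0" by simp
  have "r \<in> R" unfolding r_def using finR by simp
  then obtain a0 b0 where ab0: "a0 \<le> N" "b0 \<le> N" "r = D a0 b0 / wfun N a0 b0"
    unfolding R_def P_def by auto
  define k where "k = min a0 b0"
  define l where "l = max a0 b0"
  have rkl: "r = D k l / wfun N k l"
    using ab0 sym wsym unfolding k_def l_def by (cases "a0 \<le> b0") (auto simp: min_def max_def)
  have kl: "k \<le> l" "l \<le> N" unfolding k_def l_def using ab0 by auto
  have Fge: "r * wfun N x y \<le> D x y" if "x \<le> N" "y \<le> N" for x y
  proof -
    have "D x y / wfun N x y \<in> R" unfolding R_def P_def using that by force
    hence "r \<le> D x y / wfun N x y" unfolding r_def using finR by simp
    thus ?thesis using wfun_pos[OF that] by (simp add: pos_le_divide_eq)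
  qed
  have notbd: "\<not> (k = 0 \<or> k = N \<or> l = 0 \<or> l = N)"
  proof
    assume "k = 0 \<or> k = N \<or> l = 0 \<or> l = N"
    hence "0 \<le> D k l" using bd kl by auto
    hence "0 \<le> r" using rkl wfun_pos[of k N l] kl by simp
    thus False using rneg by simp
  qed
  hence kl2: "1 \<le> k" "l \<le> N - 1" using kl by auto
  define F where "F = (\<lambda>x y. D x y - r * wfun N x y)"
  have Fsym: "\<And>x y. F x y = F y x" unfolding F_def using sym wsym by simp
  have Fnn: "\<And>x y. x \<le> N \<Longrightarrow> y \<le> N \<Longrightarrow> 0 \<le> F x y" unfolding F_def using Fge by simp
  have Fz: "F k l = 0" unfolding F_def using rkl wfun_pos[of k N l] kl by simp
  have "0 \<le> Eop F k l" by (rule Eop_nonneg[OF Fsym Fnn Fz kl2(1) kl(1) kl2(2)])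
  moreover have "Eop F k l = Eop D k l - r * Eop (wfun N) k l" unfolding F_def by (rule Eop_lin)
  moreover have "Eop D k l = 0" using eq kl2 kl by simp
  moreover have "Eop (wfun N) k l < 0" using Eop_w kl2 kl by simp
  ultimately show False using rneg mult_neg_neg[of r "Eop (wfun N) k l"] by linarith
qed


definition mG :: "nat \<Rightarrow> real \<Rightarrow> real \<Rightarrow> nat \<Rightarrow> real" where
  "mG N Tm Tp a = Tm + real a * ((Tp - Tm) / real N)"

definition Gf :: "nat \<Rightarrow> real \<Rightarrow> real \<Rightarrow> nat \<Rightarrow> nat \<Rightarrow> real" where
  "Gf N Tm Tp a b = ((Tp - Tm) / real N)^2 / (real N + 1) * (real (min a b) * (real N - real (max a b)))
     + ((Tp - Tm) / real N)^2 * real N / (2 * (real N + 1)) * (if a = b then 1 else 0)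
     + mG N Tm Tp a * mG N Tm Tp b"

lemma Eop_lin3: "Eop (\<lambda>a b. c * P a b + e * Q a b + R a b) k l = c * Eop P k l + e * Eop Q k l + Eop R k l"
  unfolding Eop_def by (simp add: algebra_simps add_divide_distrib diff_divide_distrib)

definition gg :: "nat \<Rightarrow> nat \<Rightarrow> nat \<Rightarrow> real" where
  "gg N a b = real (min a b) * (real N - real (max a b))"
definition hh :: "nat \<Rightarrow> nat \<Rightarrow> real" where
  "hh a b = (if a = b then 1 else 0)"

lemma Eop_gg_diag: "1 \<le> k \<Longrightarrow> Eop (gg N) k k = - (real N + 2) / 3"
  by (cases k) (auto simp: Eop_def gg_def min_def max_def field_simps)
lemma Eop_gg_adj: "1 \<le> k \<Longrightarrow> Eop (gg N) k (k+1) = - (real N - 1) / 6"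
  by (cases k) (auto simp: Eop_def gg_def min_def max_def field_simps)
lemma Eop_gg_gen: "1 \<le> k \<Longrightarrow> Eop (gg N) k (k+2+j) = 0"
  by (cases k) (auto simp: Eop_def gg_def min_def max_def field_simps)
lemma Eop_hh_diag: "1 \<le> k \<Longrightarrow> Eop hh k k = - 2 / 3"
  by (cases k) (auto simp: Eop_def hh_def)
lemma Eop_hh_adj: "Eop hh k (k+1) = 2 / 3"
  by (auto simp: Eop_def hh_def)
lemma Eop_hh_gen: "1 \<le> k \<Longrightarrow> Eop hh k (k+2+j) = 0"
  by (cases k) (auto simp: Eop_def hh_def)

lemma Eop_mm:
  assumes "1 \<le> k" "k \<le> l" shows "Eop (\<lambda>a b. (T + real a * d) * (T + real b * d)) k l
     = (if l = k then 2 * d^2 / 3 else if l = k + 1 then - (d^2) / 6 else 0)"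
  using assms by (cases k; cases l) (auto simp: Eop_def field_simps power2_eq_square)


lemma Eop_G:
  assumes "1 \<le> k" "k \<le> l" "N \<ge> 1"
  shows "Eop (Gf N Tm Tp) k l = 0"
proof -
  define d where "d = (Tp - Tm) / real N"
  define c where "c = d^2 / (real N + 1)"
  define e where "e = d^2 * real N / (2 * (real N + 1))"
  have G: "Gf N Tm Tp = (\<lambda>a b. c * gg N a b + e * hh a b + (Tm + real a * d) * (Tm + real b * d))"
    unfolding Gf_def mG_def c_def e_def d_def gg_def hh_def by (intro ext) (simp only:)
  have E: "Eop (Gf N Tm Tp) k l = c * Eop (gg N) k l + e * Eop hh k l + (if l = k then 2 * d^2 / 3 else if l = k + 1 then - (d^2) / 6 else 0)"
    unfolding G Eop_lin3 using Eop_mm[OF assms(1,2)] by (simp only:)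
  have Np: "real N + 1 > 0" by simp
  have "l = k \<or> l = k + 1 \<or> l = k + 2 + (l - k - 2)" using assms(2) by linarith
  then consider "l = k" | "l = k+1" | j where "l = k + 2 + j" by blast
  then show ?thesis
  proof cases
    case 1
    have k1: "c * (real N + 2) + 2 * e = 2 * d^2"
      unfolding c_def e_def using Np by (simp add: divide_simps) (simp add: algebra_simps)
    have g: "Eop (gg N) k l = - (real N + 2) / 3" using Eop_gg_diag assms(1) 1 by simp
    have h: "Eop hh k l = - 2 / 3" using Eop_hh_diag assms(1) 1 by simp
    have "c * (- (real N + 2) / 3) + e * (- 2 / 3) + 2 * d^2 / 3 = 0" using k1 by (simp add: field_simps; linarith)
    then show ?thesis unfolding E g h using 1 by simp
  next
    case 2
    have k1: "- c * (real N - 1) + 4 * e = d^2"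
      unfolding c_def e_def using Np by (simp add: divide_simps) (simp add: algebra_simps)
    have g: "Eop (gg N) k l = - (real N - 1) / 6" using Eop_gg_adj assms(1) 2 by simp
    have h: "Eop hh k l = 2 / 3" using Eop_hh_adj assms(1) 2 by simp
    have "c * (- (real N - 1) / 6) + e * (2 / 3) + - (d^2) / 6 = 0" using k1 by (simp add: field_simps; linarith)
    then show ?thesis unfolding E g h using 2 by simp
  next
    case 3
    show ?thesis unfolding E using 3 assms Eop_gg_gen Eop_hh_gen Np by simp
  qed
qed


lemma Eop_diff: "Eop (\<lambda>a b. G a b - S a b) k l = Eop G k l - Eop S k l"
  unfolding Eop_def by (simp add: algebra_simps add_divide_distrib diff_divide_distrib)

lemma partB:
  fixes S :: "nat \<Rightarrow> nat \<Rightarrow> real" and m :: "nat \<Rightarrow> real"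
  assumes N: "N \<ge> 1"
    and mG: "\<And>a. a \<le> N \<Longrightarrow> m a = mG N Tm Tp a"
    and Ssym: "\<And>a b. S a b = S b a"
    and S0: "\<And>b. b \<le> N \<Longrightarrow> S 0 b = Tm * m b"
    and SN: "\<And>b. b \<le> N \<Longrightarrow> S N b = Tp * m b"
    and Seq: "\<And>k l. 1 \<le> k \<Longrightarrow> k \<le> l \<Longrightarrow> l \<le> N - 1 \<Longrightarrow> Eop S k l = 0"
    and kl: "k \<le> l" "l \<le> N"
  shows "S k l - m k * m l \<le> C_tilde N Tm Tp k l"
proof -
  define D where "D = (\<lambda>a b. Gf N Tm Tp a b - S a b)"
  have Gsym: "\<And>a b. Gf N Tm Tp a b = Gf N Tm Tp b a" unfolding Gf_def by (simp add: min.commute max.commute)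
  have Dsym: "\<And>a b. D a b = D b a" unfolding D_def using Gsym Ssym by simp
  have mG0: "mG N Tm Tp 0 = Tm" unfolding mG_def by simp
  have mGN: "mG N Tm Tp N = Tp" unfolding mG_def using N by simp
  have e0: "0 \<le> ((Tp - Tm) / real N)^2 * real N / (2 * (real N + 1))" by simp
  have D0: "0 \<le> D 0 b" if "b \<le> N" for b
    unfolding D_def Gf_def using S0[OF that] mG[OF that] mG0 e0 by simp
  have DN: "0 \<le> D N b" if "b \<le> N" for b
    unfolding D_def Gf_def using SN[OF that] mG[OF that] mGN e0 that by (simp add: min_def max_def)
  have bd: "0 \<le> D a b" if "a \<le> N" "b \<le> N" "a = 0 \<or> a = N \<or> b = 0 \<or> b = N" for a b
    using that D0 DN Dsym by metis
  have eq: "Eop D k l = 0" if "1 \<le> k" "k \<le> l" "l \<le> N - 1" for k l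
    unfolding D_def Eop_diff using Eop_G[OF that(1,2) N] Seq[OF that] by simp
  have "0 \<le> D k l" by (rule maxprin[OF Dsym bd eq]) (use kl in auto)
  hence "S k l \<le> Gf N Tm Tp k l" unfolding D_def by simp
  moreover have "Gf N Tm Tp k l - m k * m l = C_tilde N Tm Tp k l"
  proof -
    have mm: "m k * m l = mG N Tm Tp k * mG N Tm Tp l" using mG kl by simp
    have Np: "real N > 0" using N by simp
    have Nz: "real N \<noteq> 0" "real N + 1 \<noteq> 0" using N by auto
    show ?thesis
    proof (cases "k < l")
      case True
      then show ?thesis unfolding Gf_def C_tilde_def mm using Np
        by (simp add: min_def max_def power2_eq_square field_simps)
    next
      case False
      then have "k = l" using kl by simp
      then show ?thesis unfolding Gf_def C_tilde_def mm using Nz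
        by (simp add: power2_eq_square divide_simps)
    qed
  qed
  ultimately show ?thesis by simp
qed


lemma poly2_int:
  fixes a b c :: real
  shows "(LINT v:{0..1}|lborel. a + b * v + c * v^2) = a + b / 2 + c / 3"
proof -
  have "(LINT v:{0..1}|lborel. a + b * v + c * v^2) =
        (\<lambda>v. a * v + b * v^2 / 2 + c * v^3 / 3) 1 - (\<lambda>v. a * v + b * v^2 / 2 + c * v^3 / 3) 0"
    unfolding set_lebesgue_integral_def
    by (rule integral_FTC_atLeastAtMost)
       (auto intro!: derivative_eq_intros continuous_intros
             simp: has_real_derivative_iff_has_vector_derivative[symmetric] power2_eq_square
                   power3_eq_cube field_simps)
  then show ?thesis by simp
qed

lemma poly2_integrable: "set_integrable lborel {0..1} (\<lambda>v::real. a + b * v + c * v^2)"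
  unfolding set_integrable_def
  using borel_integrable_atLeastAtMost[of 0 1 "\<lambda>v. a + b * v + c * v^2"]
  by (simp add: mult.commute)

lemma edges_le: "(i, j) \<in> opinion_edges N \<Longrightarrow> N \<ge> 1 \<Longrightarrow> i \<le> N \<and> j \<le> N \<and> i \<noteq> j"
  unfolding opinion_edges_def by auto

lemma finite_edges: "finite (opinion_edges N)"
proof -
  have "{(k, Suc k) | k. 1 \<le> k \<and> k \<le> N - 1} = (\<lambda>k. (k, Suc k)) ` {1..N-1}" by auto
  then show ?thesis unfolding opinion_edges_def by simp
qed

lemma space_os: "space (opinion_space N) = PiE {0..N} (\<lambda>_. UNIV)"
  unfolding opinion_space_def by (simp add: space_PiM)

lemma upd_space:
  assumes "x \<in> space (opinion_space N)"
  shows "opinion_update N i j v x \<in> space (opinion_space N)"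
  using assms unfolding space_os opinion_update_def internal_vertices_def PiE_def extensional_def
  by auto

lemma upd_meas:
  assumes "(i, j) \<in> opinion_edges N" "N \<ge> 1"
  shows "(\<lambda>p. opinion_update N i j (snd p) (fst p)) \<in> measurable (opinion_space N \<Otimes>\<^sub>M lborel) (opinion_space N)"
proof -
  have ij: "i \<in> {0..N}" "j \<in> {0..N}" using edges_le[OF assms] by auto
  have "(\<lambda>p l. opinion_update N i j (snd p) (fst p) l) \<in> measurable (opinion_space N \<Otimes>\<^sub>M lborel) (Pi\<^sub>M {0..N} (\<lambda>_. borel))"
  proof (rule measurable_PiM_single')
    fix l assume l: "l \<in> {0..N}"
    show "(\<lambda>p. opinion_update N i j (snd p) (fst p) l) \<in> borel_measurable (opinion_space N \<Otimes>\<^sub>M lborel)"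
      unfolding opinion_update_def opinion_space_def using ij l by measurable
  next
    show "(\<lambda>p. opinion_update N i j (snd p) (fst p)) \<in> space (opinion_space N \<Otimes>\<^sub>M lborel) \<rightarrow> (\<Pi>\<^sub>E i\<in>{0..N}. space borel)"
    proof (rule Pi_I)
      fix p :: "(nat \<Rightarrow> real) \<times> real" assume "p \<in> space (opinion_space N \<Otimes>\<^sub>M lborel)"
      then have "fst p \<in> space (opinion_space N)" unfolding space_pair_measure by auto
      from upd_space[OF this] show "opinion_update N i j (snd p) (fst p) \<in> (\<Pi>\<^sub>E i\<in>{0..N}. space borel)"
        unfolding space_os by simp
    qed
  qed
  then show ?thesis unfolding opinion_space_def by simp
qed

lemma gen_meas:
  assumes f: "f \<in> borel_measurable (opinion_space N)" and N: "N \<ge> 1"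
  shows "opinion_generator N f \<in> borel_measurable (opinion_space N)"
proof -
  have "(\<lambda>x. LINT v:{0..1}|lborel. (f (opinion_update N i j v x) - f x)) \<in> borel_measurable (opinion_space N)"
    if e: "(i, j) \<in> opinion_edges N" for i j
  proof -
    have m1: "(\<lambda>p. f (opinion_update N i j (snd p) (fst p))) \<in> borel_measurable (opinion_space N \<Otimes>\<^sub>M lborel)"
      using measurable_compose[OF upd_meas[OF e N] f] .
    have m2: "(\<lambda>p. f (fst p)) \<in> borel_measurable (opinion_space N \<Otimes>\<^sub>M lborel)"
      by (rule measurable_compose[OF measurable_fst f])
    have "case_prod (\<lambda>x v. indicator {0..1::real} v *\<^sub>R (f (opinion_update N i j v x) - f x)) \<in> borel_measurable (opinion_space N \<Otimes>\<^sub>M lborel)"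
    proof -
      have m3: "(\<lambda>p. indicator {0..1::real} (snd p)) \<in> borel_measurable (opinion_space N \<Otimes>\<^sub>M lborel)"
        by (rule measurable_compose[OF measurable_snd]) simp
      have "(\<lambda>p. indicator {0..1::real} (snd p) *\<^sub>R (f (opinion_update N i j (snd p) (fst p)) - f (fst p)))
          \<in> borel_measurable (opinion_space N \<Otimes>\<^sub>M lborel)"
        using m1 m2 m3 by (intro borel_measurable_scaleR borel_measurable_diff) auto
      then show ?thesis by (simp add: case_prod_beta')
    qed
    then show ?thesis unfolding set_lebesgue_integral_def
      by (rule lborel.borel_measurable_lebesgue_integral)
  qed
  then show ?thesis unfolding opinion_generator_def
    by (intro borel_measurable_sum) auto
qed

lemma set_int_bound:
  fixes g :: "real \<Rightarrow> real"
  assumes "\<And>v. \<bar>g v\<bar> \<le> B"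
  shows "\<bar>LINT v:{0..1}|lborel. g v\<bar> \<le> B"
proof -
  have B: "0 \<le> B" using assms[of 0] by simp
  have "\<bar>LINT v:{0..1}|lborel. g v\<bar> \<le> (\<integral>v. norm (indicator {0..1} v *\<^sub>R g v) \<partial>lborel)"
    unfolding set_lebesgue_integral_def using integral_norm_bound[of lborel "\<lambda>v. indicator {0..1} v *\<^sub>R g v"] by simp
  also have "\<dots> \<le> (\<integral>v. indicator {0..1} v *\<^sub>R (B + 0 * v + 0 * v^2) \<partial>lborel)"
  proof (rule integral_mono_AE')
    show "integrable lborel (\<lambda>v. indicator {0..1} v *\<^sub>R (B + 0 * v + 0 * v^2))"
      using poly2_integrable[of B 0 0] unfolding set_integrable_def .
    show "AE v in lborel. norm (indicator {0..1} v *\<^sub>R g v) \<le> indicator {0..1} v *\<^sub>R (B + 0 * v + 0 * v^2)"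
      using assms by (auto simp: indicator_def)
    show "AE v in lborel. 0 \<le> indicator {0..1} v *\<^sub>R (B + 0 * v + 0 * v^2)"
      using B by (auto simp: indicator_def)
  qed
  also have "\<dots> = B" using poly2_int[of B 0 0] unfolding set_lebesgue_integral_def by simp
  finally show ?thesis .
qed

lemma gen_bound:
  assumes "\<And>x. \<bar>f x\<bar> \<le> B"
  shows "\<bar>opinion_generator N f x\<bar> \<le> real (card (opinion_edges N)) * (2 * B)"
proof -
  have "\<bar>opinion_generator N f x\<bar> \<le> (\<Sum>e\<in>opinion_edges N. 2 * B)"
    unfolding opinion_generator_def
  proof (rule order_trans[OF sum_abs], rule sum_mono)
    fix e assume "e \<in> opinion_edges N"
    obtain i j where e: "e = (i, j)" by (cases e)
    have "\<bar>f (opinion_update N i j v x) - f x\<bar> \<le> 2 * B" for v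
      using assms[of x] assms[of "opinion_update N i j v x"]
        abs_triangle_ineq4[of "f (opinion_update N i j v x)" "f x"] by linarith
    then show "\<bar>case e of (i, j) \<Rightarrow> LINT v:{0..1}|lborel. f (opinion_update N i j v x) - f x\<bar> \<le> 2 * B"
      unfolding e by (simp add: set_int_bound)
  qed
  then show ?thesis by simp
qed


definition phi :: "real \<Rightarrow> real \<Rightarrow> real" where
  "phi hi t = (max (t - hi) 0)^2"

lemma phi_nonneg: "0 \<le> phi hi t" unfolding phi_def by simp
lemma phi_zero: "t \<le> hi \<Longrightarrow> phi hi t = 0" unfolding phi_def by simp
lemma phi_pos: "t > hi \<Longrightarrow> phi hi t > 0" unfolding phi_def by simp

lemma phi_conv:
  assumes v: "0 \<le> v" "v \<le> 1"
  shows "phi hi (v * a + (1 - v) * b) \<le> v * phi hi a + (1 - v) * phi hi b"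
proof -
  define pa where "pa = max (a - hi) 0"
  define pb where "pb = max (b - hi) 0"
  have p0: "0 \<le> pa" "0 \<le> pb" unfolding pa_def pb_def by auto
  have "v * a + (1 - v) * b - hi = v * (a - hi) + (1 - v) * (b - hi)" by (simp add: algebra_simps)
  also have "\<dots> \<le> v * pa + (1 - v) * pb"
    using v unfolding pa_def pb_def by (intro add_mono mult_left_mono) auto
  finally have h1: "max (v * a + (1 - v) * b - hi) 0 \<le> v * pa + (1 - v) * pb"
    using v p0 by simp
  have h2: "(v * pa + (1 - v) * pb)^2 \<le> v * pa^2 + (1 - v) * pb^2"
  proof -
    have "v * pa^2 + (1 - v) * pb^2 - (v * pa + (1 - v) * pb)^2 = v * (1 - v) * (pa - pb)^2"
      by (simp add: power2_eq_square algebra_simps)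
    also have "\<dots> \<ge> 0" using v by simp
    finally show ?thesis by simp
  qed
  have "phi hi (v * a + (1 - v) * b) \<le> (v * pa + (1 - v) * pb)^2"
    unfolding phi_def by (rule power_mono[OF h1]) simp
  also note h2
  finally show ?thesis unfolding phi_def pa_def pb_def .
qed

lemma phi_special1:
  assumes v: "0 \<le> v" "v \<le> 1" and a: "a \<le> hi"
  shows "phi hi (v * a + (1 - v) * b) \<le> (1 - v)^2 * phi hi b"
proof -
  have "v * a + (1 - v) * b - hi \<le> (1 - v) * max (b - hi) 0"
  proof -
    have "v * a + (1 - v) * b - hi = v * (a - hi) + (1 - v) * (b - hi)" by (simp add: algebra_simps)
    also have "\<dots> \<le> 0 + (1 - v) * max (b - hi) 0"
      using v a by (intro add_mono mult_left_mono) (auto simp: mult_nonneg_nonpos)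
    finally show ?thesis by simp
  qed
  then have "max (v * a + (1 - v) * b - hi) 0 \<le> (1 - v) * max (b - hi) 0" using v by simp
  then have "phi hi (v * a + (1 - v) * b) \<le> ((1 - v) * max (b - hi) 0)^2"
    unfolding phi_def by (rule power_mono) simp
  then show ?thesis unfolding phi_def by (simp add: power_mult_distrib)
qed

lemma phi_special2:
  assumes v: "0 \<le> v" "v \<le> 1" and b: "b \<le> hi"
  shows "phi hi (v * a + (1 - v) * b) \<le> v^2 * phi hi a"
  using phi_special1[of "1 - v" b hi a] v b by (simp add: algebra_simps)

lemma poly2_int':
  fixes P :: "real \<Rightarrow> real"
  assumes "\<And>v. P v = a + b * v + c * v^2"
  shows "(LINT v:{0..1}|lborel. P v) = a + b / 2 + c / 3" "set_integrable lborel {0..1} P"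
proof -
  have "P = (\<lambda>v. a + b * v + c * v^2)" using assms by auto
  then show "(LINT v:{0..1}|lborel. P v) = a + b / 2 + c / 3" "set_integrable lborel {0..1} P"
    using poly2_int poly2_integrable by auto
qed

lemma bounded_set_integrable:
  fixes g :: "real \<Rightarrow> real"
  assumes "g \<in> borel_measurable lborel" "\<And>v. \<bar>g v\<bar> \<le> B"
  shows "set_integrable lborel {0..1} g"
  unfolding set_integrable_def
proof (rule Bochner_Integration.integrable_bound)
  show "integrable lborel (\<lambda>v. indicator {0..1} v *\<^sub>R (B + 0 * v + 0 * v^2))"
    using poly2_integrable[of B 0 0] unfolding set_integrable_def .
  show "(\<lambda>v. indicat_real {0..1} v *\<^sub>R g v) \<in> borel_measurable lborel"
    using assms(1) by (intro borel_measurable_scaleR) auto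
  show "AE v in lborel. norm (indicator {0..1} v *\<^sub>R g v) \<le> norm (indicator {0..1} v *\<^sub>R (B + 0 * v + 0 * v^2))"
  proof (rule AE_I2)
    fix v
    have "\<bar>g v\<bar> \<le> \<bar>B\<bar>" using assms(2)[of v] by linarith
    then show "norm (indicator {0..1} v *\<^sub>R g v) \<le> norm (indicator {0..1} v *\<^sub>R (B + 0 * v + 0 * v^2))"
      by (auto simp: indicator_def)
  qed
qed


definition FF :: "nat \<Rightarrow> real \<Rightarrow> (nat \<Rightarrow> real) \<Rightarrow> real" where
  "FF N hi x = (\<Sum>k\<in>{1..N-1}. phi hi (x k))"

definition fK :: "nat \<Rightarrow> real \<Rightarrow> nat \<Rightarrow> (nat \<Rightarrow> real) \<Rightarrow> real" where
  "fK N hi K x = min (FF N hi x) (real K)"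

lemma FF_nonneg: "0 \<le> FF N hi x" unfolding FF_def by (intro sum_nonneg) (simp add: phi_nonneg)

lemma fK_bound: "\<bar>fK N hi K x\<bar> \<le> real K"
  unfolding fK_def using FF_nonneg[of N hi x] by simp

lemma edge_i_int: "(i, j) \<in> opinion_edges N \<Longrightarrow> N \<ge> 2 \<Longrightarrow> i \<in> {1..N-1} \<and> i \<noteq> j \<and> j \<le> N \<and> (j \<notin> {1..N-1} \<longrightarrow> j = 0 \<or> j = N)"
  unfolding opinion_edges_def by auto

lemma FF_upd:
  assumes e: "(i, j) \<in> opinion_edges N" and N: "N \<ge> 2"
  shows "FF N hi (opinion_update N i j v x) - FF N hi x =
    (phi hi (v * x i + (1 - v) * x j) - phi hi (x i))
    + (if j \<in> {1..N-1} then phi hi (v * x i + (1 - v) * x j) - phi hi (x j) else 0)"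
proof -
  define U where "U = v * x i + (1 - v) * x j"
  define I where "I = {1..N-1}"
  have ei: "i \<in> I" "i \<noteq> j" using edge_i_int[OF e N] unfolding I_def by auto
  define g where "g l = (if l = i \<or> l = j then phi hi U - phi hi (x l) else 0)" for l
  have "FF N hi (opinion_update N i j v x) - FF N hi x = (\<Sum>l\<in>I. phi hi (opinion_update N i j v x l) - phi hi (x l))"
    unfolding FF_def I_def by (simp add: sum_subtractf)
  also have "\<dots> = (\<Sum>l\<in>I. g l)"
    by (rule sum.cong) (auto simp: g_def opinion_update_def internal_vertices_def I_def U_def)
  also have "\<dots> = g i + (\<Sum>l\<in>I - {i}. g l)"
    using ei sum.remove[of I i g] unfolding I_def by simp
  also have "(\<Sum>l\<in>I - {i}. g l) = (\<Sum>l\<in>I - {i}. if l = j then phi hi U - phi hi (x j) else 0)"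
    by (rule sum.cong) (auto simp: g_def)
  also have "\<dots> = (if j \<in> I then phi hi U - phi hi (x j) else 0)"
    using ei by (simp add: sum.delta I_def)
  finally show ?thesis unfolding g_def U_def I_def by simp
qed

lemma fK_upd_meas:
  "(\<lambda>v. fK N hi K (opinion_update N i j v x)) \<in> borel_measurable lborel"
  unfolding fK_def FF_def phi_def opinion_update_def by measurable

lemma fK_upd_int:
  "set_integrable lborel {0..1} (\<lambda>v. fK N hi K (opinion_update N i j v x) - fK N hi K x)"
proof (rule bounded_set_integrable)
  show "(\<lambda>v. fK N hi K (opinion_update N i j v x) - fK N hi K x) \<in> borel_measurable lborel"
    using fK_upd_meas by measurable
  fix v
  show "\<bar>fK N hi K (opinion_update N i j v x) - fK N hi K x\<bar> \<le> 2 * real K"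
    using fK_bound[of N hi K x] fK_bound[of N hi K "opinion_update N i j v x"]
      abs_triangle_ineq4[of "fK N hi K (opinion_update N i j v x)" "fK N hi K x"] by linarith
qed

lemma int_le_poly:
  fixes g :: "real \<Rightarrow> real"
  assumes "set_integrable lborel {0..1} g" "\<And>v. 0 \<le> v \<Longrightarrow> v \<le> 1 \<Longrightarrow> g v \<le> a + b * v + c * v^2"
  shows "(LINT v:{0..1}|lborel. g v) \<le> a + b / 2 + c / 3"
proof -
  have "(LINT v:{0..1}|lborel. g v) \<le> (LINT v:{0..1}|lborel. a + b * v + c * v^2)"
    using assms poly2_integrable by (intro set_integral_mono) auto
  then show ?thesis using poly2_int by simp
qed


abbreviation EI where
  "EI N hi K i j x \<equiv> LINT v:{0..1}|lborel. (fK N hi K (opinion_update N i j v x) - fK N hi K x)"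

lemma EI_small:
  assumes e: "(i, j) \<in> opinion_edges N" and N: "N \<ge> 2" and lt: "FF N hi x < real K"
    and P: "\<And>v. 0 \<le> v \<Longrightarrow> v \<le> 1 \<Longrightarrow> FF N hi (opinion_update N i j v x) - FF N hi x \<le> a + b * v + c * v^2"
  shows "EI N hi K i j x \<le> a + b / 2 + c / 3"
proof (rule int_le_poly[OF fK_upd_int])
  fix v :: real assume v: "0 \<le> v" "v \<le> 1"
  have "fK N hi K (opinion_update N i j v x) - fK N hi K x \<le> FF N hi (opinion_update N i j v x) - FF N hi x"
    unfolding fK_def using lt by simp
  also have "\<dots> \<le> a + b * v + c * v^2" using P v by simp
  finally show "fK N hi K (opinion_update N i j v x) - fK N hi K x \<le> a + b * v + c * v^2" .
qed

lemma EI_le: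
  assumes e: "(i, j) \<in> opinion_edges N" and N: "N \<ge> 2" and x0: "x 0 \<le> hi" and xN: "x N \<le> hi"
  shows "EI N hi K i j x \<le> 0"
proof (cases "FF N hi x < real K")
  case False
  have "EI N hi K i j x \<le> 0 + 0 / 2 + 0 / 3"
  proof (rule int_le_poly[OF fK_upd_int])
    fix v :: real
    show "fK N hi K (opinion_update N i j v x) - fK N hi K x \<le> 0 + 0 * v + 0 * v^2"
      unfolding fK_def using False by simp
  qed
  then show ?thesis by simp
next
  case True
  have ei: "i \<in> {1..N-1}" "j \<le> N" "j \<notin> {1..N-1} \<Longrightarrow> j = 0 \<or> j = N" using edge_i_int[OF e N] by auto
  define pi where "pi = phi hi (x i)"
  define pj where "pj = phi hi (x j)"
  show ?thesis
  proof (cases "j \<in> {1..N-1}")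
    case True2: True
    have "EI N hi K i j x \<le> (pj - pi) + (2 * (pi - pj)) / 2 + 0 / 3"
    proof (rule EI_small[OF e N True])
      fix v :: real assume v: "0 \<le> v" "v \<le> 1"
      show "FF N hi (opinion_update N i j v x) - FF N hi x \<le> (pj - pi) + (2 * (pi - pj)) * v + 0 * v^2"
        unfolding FF_upd[OF e N] using True2 phi_conv[OF v, of hi "x i" "x j"]
        by (simp add: pi_def pj_def algebra_simps)
    qed
    then show ?thesis by (simp add: field_simps)
  next
    case False2: False
    have "x j \<le> hi" using ei(3)[OF False2] x0 xN by auto
    then have pj0: "pj = 0" unfolding pj_def by (rule phi_zero)
    have "EI N hi K i j x \<le> (- pi) + pi / 2 + 0 / 3"
    proof (rule EI_small[OF e N True])
      fix v :: real assume v: "0 \<le> v" "v \<le> 1"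
      show "FF N hi (opinion_update N i j v x) - FF N hi x \<le> (- pi) + pi * v + 0 * v^2"
        unfolding FF_upd[OF e N] using False2 phi_conv[OF v, of hi "x i" "x j"] pj0
        by (auto simp: pi_def pj_def algebra_simps)
    qed
    then show ?thesis using phi_nonneg[of hi "x i"] by (simp add: pi_def)
  qed
qed

lemma EI_lt_b:
  assumes e: "(i, j) \<in> opinion_edges N" and N: "N \<ge> 2" and lt: "FF N hi x < real K"
    and xi: "x i > hi" and xj: "x j \<le> hi"
  shows "EI N hi K i j x < 0"
proof -
  define pi where "pi = phi hi (x i)"
  have pj0: "phi hi (x j) = 0" using xj by (rule phi_zero)
  have pip: "pi > 0" unfolding pi_def using xi by (rule phi_pos)
  show ?thesis
  proof (cases "j \<in> {1..N-1}")
    case True2: True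
    have "EI N hi K i j x \<le> (- pi) + 0 / 2 + (2 * pi) / 3"
    proof (rule EI_small[OF e N lt])
      fix v :: real assume v: "0 \<le> v" "v \<le> 1"
      show "FF N hi (opinion_update N i j v x) - FF N hi x \<le> (- pi) + 0 * v + (2 * pi) * v^2"
        unfolding FF_upd[OF e N] using True2 phi_special2[OF v xj, of "x i"] pj0
        by (simp add: pi_def algebra_simps)
    qed
    then show ?thesis using pip by simp
  next
    case False2: False
    have "EI N hi K i j x \<le> (- pi) + 0 / 2 + pi / 3"
    proof (rule EI_small[OF e N lt])
      fix v :: real assume v: "0 \<le> v" "v \<le> 1"
      show "FF N hi (opinion_update N i j v x) - FF N hi x \<le> (- pi) + 0 * v + pi * v^2"
        unfolding FF_upd[OF e N] using False2 phi_special2[OF v xj, of "x i"]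
        by (auto simp: pi_def algebra_simps)
    qed
    then show ?thesis using pip by simp
  qed
qed

lemma EI_lt_c:
  assumes e: "(i, j) \<in> opinion_edges N" and N: "N \<ge> 2" and lt: "FF N hi x < real K"
    and xi: "x i \<le> hi" and xj: "x j > hi" and j: "j \<in> {1..N-1}"
  shows "EI N hi K i j x < 0"
proof -
  define pj where "pj = phi hi (x j)"
  have pi0: "phi hi (x i) = 0" using xi by (rule phi_zero)
  have pjp: "pj > 0" unfolding pj_def using xj by (rule phi_pos)
  have "EI N hi K i j x \<le> pj + (- 4 * pj) / 2 + (2 * pj) / 3"
  proof (rule EI_small[OF e N lt])
    fix v :: real assume v: "0 \<le> v" "v \<le> 1"
    have "FF N hi (opinion_update N i j v x) - FF N hi x \<le> 2 * ((1 - v)^2 * pj) - pj"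
      unfolding FF_upd[OF e N] using j phi_special1[OF v xi, of "x j"] pi0
      by (simp add: pj_def algebra_simps)
    also have "\<dots> = pj + (- 4 * pj) * v + (2 * pj) * v^2" by (simp add: power2_eq_square algebra_simps)
    finally show "FF N hi (opinion_update N i j v x) - FF N hi x \<le> pj + (- 4 * pj) * v + (2 * pj) * v^2" .
  qed
  then show ?thesis using pjp by simp
qed

lemma gen_fK_le:
  assumes N: "N \<ge> 2" and x0: "x 0 \<le> hi" and xN: "x N \<le> hi"
  shows "opinion_generator N (fK N hi K) x \<le> 0"
  unfolding opinion_generator_def
  by (rule sum_nonpos) (use EI_le[OF _ N x0 xN] in auto)

lemma gen_fK_lt:
  assumes N: "N \<ge> 2" and x0: "x 0 \<le> hi" and xN: "x N \<le> hi" and lt: "FF N hi x < real K"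
    and ex: "\<exists>k\<in>{1..N-1}. x k > hi"
  shows "opinion_generator N (fK N hi K) x < 0"
proof -
  obtain k where k: "k \<in> {1..N-1}" "x k > hi" and kmin: "\<And>k'. k' < k \<Longrightarrow> k' \<in> {1..N-1} \<Longrightarrow> x k' \<le> hi"
  proof -
    define k where "k = (LEAST k. k \<in> {1..N-1} \<and> x k > hi)"
    have ex2: "\<exists>k. k \<in> {1..N-1} \<and> x k > hi" using ex by blast
    have "k \<in> {1..N-1} \<and> x k > hi" unfolding k_def by (rule LeastI_ex[OF ex2])
    moreover have "\<And>k'. k' < k \<Longrightarrow> k' \<in> {1..N-1} \<Longrightarrow> x k' \<le> hi"
      unfolding k_def using not_less_Least by fastforce
    ultimately show ?thesis using that by blast
  qed
  obtain e where e: "e \<in> opinion_edges N" and neg: "(case e of (i, j) \<Rightarrow> EI N hi K i j x) < 0"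
  proof (cases "k = 1")
    case True
    have e: "(1, 0) \<in> opinion_edges N" unfolding opinion_edges_def by simp
    have "EI N hi K 1 0 x < 0" using EI_lt_b[OF e N lt] k True x0 by simp
    then show ?thesis using that e by auto
  next
    case False
    then have k2: "k \<ge> 2" using k by auto
    have e: "(k - 1, k) \<in> opinion_edges N" unfolding opinion_edges_def using k2 k by auto
    have "x (k - 1) \<le> hi" by (rule kmin) (use k2 k in auto)
    then have "EI N hi K (k - 1) k x < 0" using EI_lt_c[OF e N lt] k by simp
    then show ?thesis using that e by auto
  qed
  have "opinion_generator N (fK N hi K) x < (\<Sum>e\<in>opinion_edges N. 0)"
    unfolding opinion_generator_def
  proof (rule sum_strict_mono_ex1)
    show "finite (opinion_edges N)" by (rule finite_edges)
    show "\<forall>e\<in>opinion_edges N. (case e of (i, j) \<Rightarrow> EI N hi K i j x) \<le> 0"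
      using EI_le[OF _ N x0 xN] by auto
    show "\<exists>e\<in>opinion_edges N. (case e of (i, j) \<Rightarrow> EI N hi K i j x) < 0" using e neg by blast
  qed
  then show ?thesis by simp
qed


locale opn =
  fixes N :: nat and Tm Tp :: real and \<nu> :: "(nat \<Rightarrow> real) measure"
  assumes N2: "N \<ge> 2" and Tm: "Tm > 0" and Tp: "Tp > 0"
    and inv: "opinion_invariant N Tm Tp \<nu>"
begin

definition hi where "hi = max Tm Tp"

lemma prob: "prob_space \<nu>" using inv unfolding opinion_invariant_def by simp
lemma sets_eq: "sets \<nu> = sets (opinion_space N)" using inv unfolding opinion_invariant_def by simp
lemma space_eq: "space \<nu> = space (opinion_space N)" using sets_eq_imp_space_eq[OF sets_eq] .
lemma meas_eq: "borel_measurable \<nu> = borel_measurable (opinion_space N)"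
  using measurable_cong_sets[OF sets_eq refl] .
lemma AEbd: "AE x in \<nu>. x 0 = Tm \<and> x N = Tp \<and> (\<forall>k\<in>{0..N}. 0 \<le> x k)"
  using inv unfolding opinion_invariant_def by simp

lemma invar:
  assumes "f \<in> borel_measurable (opinion_space N)" "\<And>x. \<bar>f x\<bar> \<le> B"
  shows "(\<integral>x. opinion_generator N f x \<partial>\<nu>) = 0"
  using inv assms unfolding opinion_invariant_def by blast

lemma gen_integrable:
  assumes f: "f \<in> borel_measurable (opinion_space N)" and B: "\<And>x. \<bar>f x\<bar> \<le> B"
  shows "integrable \<nu> (opinion_generator N f)"
proof -
  interpret prob_space \<nu> by (rule prob)
  show ?thesis
  proof (rule integrable_const_bound)
    show "AE x in \<nu>. norm (opinion_generator N f x) \<le> real (card (opinion_edges N)) * (2 * B)"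
      using gen_bound[of f B N] B by simp
    show "opinion_generator N f \<in> borel_measurable \<nu>"
      unfolding meas_eq using gen_meas[OF f] N2 by simp
  qed
qed

lemma fK_meas: "fK N h K \<in> borel_measurable (opinion_space N)"
proof -
  have "(\<lambda>x. x k) \<in> borel_measurable (opinion_space N)" if "k \<in> {1..N-1}" for k
    unfolding opinion_space_def using that by (intro measurable_component_singleton) auto
  moreover have ph: "phi h \<in> borel_measurable borel" unfolding phi_def by measurable
  ultimately have "(\<lambda>x. \<Sum>k\<in>{1..N-1}. phi h (x k)) \<in> borel_measurable (opinion_space N)"
    by (intro borel_measurable_sum measurable_compose[OF _ ph]) auto
  then have "(\<lambda>x. min (\<Sum>k\<in>{1..N-1}. phi h (x k)) (real K)) \<in> borel_measurable (opinion_space N)"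
    by (intro borel_measurable_min) auto
  then show ?thesis unfolding fK_def FF_def by simp
qed

lemma hi_ge: "Tm \<le> hi" "Tp \<le> hi" "0 < hi" unfolding hi_def using Tm by auto

lemma box_upper: "AE x in \<nu>. \<forall>k\<in>{1..N-1}. x k \<le> hi"
proof -
  interpret prob_space \<nu> by (rule prob)
  have step: "AE x in \<nu>. \<not> (FF N hi x < real K \<and> (\<exists>k\<in>{1..N-1}. x k > hi))" for K
  proof -
    let ?L = "opinion_generator N (fK N hi K)"
    have B: "\<And>x. \<bar>fK N hi K x\<bar> \<le> real K" by (rule fK_bound)
    have int: "integrable \<nu> ?L" by (rule gen_integrable[OF fK_meas B])
    have z: "(\<integral>x. ?L x \<partial>\<nu>) = 0" by (rule invar[OF fK_meas B])
    have le: "AE x in \<nu>. ?L x \<le> 0"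
      using AEbd by eventually_elim (use gen_fK_le[OF N2] hi_ge in auto)
    have "(\<integral>x. - ?L x \<partial>\<nu>) = 0" using z by simp
    moreover have "AE x in \<nu>. 0 \<le> - ?L x" using le by eventually_elim simp
    ultimately have "AE x in \<nu>. - ?L x = 0"
      using integral_nonneg_eq_0_iff_AE[of \<nu> "\<lambda>x. - ?L x"] int by simp
    then show ?thesis using AEbd
      by eventually_elim (use gen_fK_lt[OF N2] hi_ge in fastforce)
  qed
  have "AE x in \<nu>. \<forall>K::nat. \<not> (FF N hi x < real K \<and> (\<exists>k\<in>{1..N-1}. x k > hi))"
    unfolding AE_all_countable using step by blast
  then show ?thesis
  proof eventually_elim
    case (elim x)
    obtain K :: nat where "FF N hi x < real K" using reals_Archimedean2 by blast
    then show ?case using elim[rule_format, of K] by auto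
  qed
qed

definition Bx where "Bx = {x. x 0 = Tm \<and> x N = Tp \<and> (\<forall>k\<in>{0..N}. 0 \<le> x k \<and> x k \<le> hi)}"

lemma AE_box: "AE x in \<nu>. x \<in> Bx \<and> x \<in> space (opinion_space N)"
  using AEbd box_upper AE_space
proof eventually_elim
  case (elim x)
  have "x k \<le> hi" if "k \<in> {0..N}" for k
  proof -
    have "k = 0 \<or> k = N \<or> k \<in> {1..N-1}" using that by auto
    then show ?thesis using elim hi_ge by auto
  qed
  then show ?case using elim space_eq unfolding Bx_def by auto
qed

end


definition clip :: "real \<Rightarrow> real \<Rightarrow> real" where "clip h t = max 0 (min h t)"

definition updv :: "nat \<Rightarrow> nat \<Rightarrow> nat \<Rightarrow> nat \<Rightarrow> bool" where
  "updv N i j k \<longleftrightarrow> k \<in> {i, j} \<inter> internal_vertices N"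

definition Dt :: "nat \<Rightarrow> nat \<Rightarrow> nat \<Rightarrow> nat \<Rightarrow> (nat \<Rightarrow> real) \<Rightarrow> real" where
  "Dt N i j k x = (if updv N i j k then (x i + x j) / 2 - x k else 0)"

definition Ct :: "nat \<Rightarrow> nat \<Rightarrow> nat \<Rightarrow> nat \<Rightarrow> nat \<Rightarrow> (nat \<Rightarrow> real) \<Rightarrow> real" where
  "Ct N i j k l x = (if updv N i j k \<and> updv N i j l then
      (if k = l then (x i - x j)^2 / 3 else - ((x i - x j)^2) / 6) else 0)"

definition Aterm :: "nat \<Rightarrow> nat \<Rightarrow> nat \<Rightarrow> nat \<Rightarrow> nat \<Rightarrow> (nat \<Rightarrow> real) \<Rightarrow> real" where
  "Aterm N i j k l x = x l * Dt N i j k x + x k * Dt N i j l x + Ct N i j k l x"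

lemma upd_val: "opinion_update N i j v x k = (if updv N i j k then v * x i + (1 - v) * x j else x k)"
  unfolding opinion_update_def updv_def by simp

lemma upd_range:
  assumes e: "(i, j) \<in> opinion_edges N" and N: "N \<ge> 2" and m: "m \<le> N"
    and x: "\<And>m. m \<le> N \<Longrightarrow> 0 \<le> x m \<and> x m \<le> h" and v: "0 \<le> v" "v \<le> 1"
  shows "0 \<le> opinion_update N i j v x m \<and> opinion_update N i j v x m \<le> h"
proof -
  have ij: "i \<le> N" "j \<le> N" using edge_i_int[OF e N] by auto
  have "0 \<le> v * x i + (1 - v) * x j" using x[OF ij(1)] x[OF ij(2)] v by simp
  moreover have "v * x i + (1 - v) * x j \<le> v * h + (1 - v) * h"
    using x[OF ij(1)] x[OF ij(2)] v by (intro add_mono mult_left_mono) auto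
  ultimately show ?thesis unfolding upd_val using x[OF m] by (auto simp: algebra_simps)
qed

lemma edge_formula:
  assumes e: "(i, j) \<in> opinion_edges N" and N: "N \<ge> 2" and k: "k \<le> N" and l: "l \<le> N"
    and x: "\<And>m. m \<le> N \<Longrightarrow> 0 \<le> x m \<and> x m \<le> h"
  shows "(LINT v:{0..1}|lborel. (clip h (opinion_update N i j v x k) * clip h (opinion_update N i j v x l)
            - clip h (x k) * clip h (x l))) = Aterm N i j k l x"
proof -
  have ij: "i \<noteq> j" using edge_i_int[OF e N] by auto
  have cl: "clip h t = t" if "0 \<le> t" "t \<le> h" for t using that unfolding clip_def by simp
  have "(LINT v:{0..1}|lborel. (clip h (opinion_update N i j v x k) * clip h (opinion_update N i j v x l)
            - clip h (x k) * clip h (x l))) =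
        (LINT v:{0..1}|lborel. (opinion_update N i j v x k * opinion_update N i j v x l - x k * x l))"
    by (rule set_lebesgue_integral_cong) (auto simp: cl upd_range[OF e N _ x] x k l)
  also have "\<dots> = Aterm N i j k l x"
  proof (cases "updv N i j k"; cases "updv N i j l")
    assume P: "updv N i j k" and Q: "updv N i j l"
    have kl: "k \<in> {i, j}" "l \<in> {i, j}" using P Q unfolding updv_def by auto
    have "(LINT v:{0..1}|lborel. (opinion_update N i j v x k * opinion_update N i j v x l - x k * x l))
       = (x j ^ 2 - x k * x l) + (2 * x j * (x i - x j)) / 2 + ((x i - x j)^2) / 3"
      by (rule poly2_int') (simp add: upd_val P Q power2_eq_square algebra_simps)
    also have "\<dots> = Aterm N i j k l x"
      using kl ij unfolding Aterm_def Dt_def Ct_def using P Q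
      by (auto simp: power2_eq_square field_simps)
    finally show ?thesis .
  next
    assume P: "updv N i j k" and Q: "\<not> updv N i j l"
    have "(LINT v:{0..1}|lborel. (opinion_update N i j v x k * opinion_update N i j v x l - x k * x l))
       = (x j * x l - x k * x l) + ((x i - x j) * x l) / 2 + 0 / 3"
      by (rule poly2_int') (simp add: upd_val P Q algebra_simps)
    also have "\<dots> = Aterm N i j k l x"
      unfolding Aterm_def Dt_def Ct_def using P Q by (simp add: field_simps)
    finally show ?thesis .
  next
    assume P: "\<not> updv N i j k" and Q: "updv N i j l"
    have "(LINT v:{0..1}|lborel. (opinion_update N i j v x k * opinion_update N i j v x l - x k * x l))
       = (x j * x k - x k * x l) + ((x i - x j) * x k) / 2 + 0 / 3"
      by (rule poly2_int') (simp add: upd_val P Q algebra_simps)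
    also have "\<dots> = Aterm N i j k l x"
      unfolding Aterm_def Dt_def Ct_def using P Q by (simp add: field_simps)
    finally show ?thesis .
  next
    assume P: "\<not> updv N i j k" and Q: "\<not> updv N i j l"
    have "(LINT v:{0..1}|lborel. (opinion_update N i j v x k * opinion_update N i j v x l - x k * x l))
       = 0 + 0 / 2 + 0 / 3"
      by (rule poly2_int') (simp add: upd_val P Q)
    also have "\<dots> = Aterm N i j k l x"
      unfolding Aterm_def Dt_def Ct_def using P Q by simp
    finally show ?thesis .
  qed
  finally show ?thesis .
qed


lemma edges_sum:
  assumes N: "N \<ge> 2" and h: "h 1 0 = h 0 1"
  shows "(\<Sum>(i, j)\<in>opinion_edges N. h i j) = (\<Sum>m\<in>{0..<N}. h m (Suc m))"
proof -
  have E: "opinion_edges N = insert (1, 0) ((\<lambda>m. (m, Suc m)) ` {1..<N})"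
    unfolding opinion_edges_def using N by auto
  have "(\<Sum>(i, j)\<in>opinion_edges N. h i j) = h 1 0 + (\<Sum>(i, j)\<in>(\<lambda>m. (m, Suc m)) ` {1..<N}. h i j)"
    unfolding E by (subst sum.insert) auto
  also have "(\<Sum>(i, j)\<in>(\<lambda>m. (m, Suc m)) ` {1..<N}. h i j) = (\<Sum>m\<in>{1..<N}. h m (Suc m))"
    by (subst sum.reindex) (auto simp: inj_on_def)
  also have "h 1 0 + (\<Sum>m\<in>{1..<N}. h m (Suc m)) = (\<Sum>m\<in>{0..<N}. h m (Suc m))"
    using h N by (simp add: sum.atLeast_Suc_lessThan)
  finally show ?thesis .
qed

lemma sum2:
  assumes "finite S" "a \<in> S" "b \<in> S" "a \<noteq> b" "\<And>m. m \<in> S \<Longrightarrow> m \<noteq> a \<Longrightarrow> m \<noteq> b \<Longrightarrow> g m = 0"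
  shows "sum g S = g a + g b"
proof -
  have "sum g S = sum g {a, b}"
    using assms by (intro sum.mono_neutral_right) auto
  then show ?thesis using assms by simp
qed

lemma sum1:
  assumes "finite S" "a \<in> S" "\<And>m. m \<in> S \<Longrightarrow> m \<noteq> a \<Longrightarrow> g m = 0"
  shows "sum g S = g a"
proof -
  have "sum g S = sum g {a}"
    using assms by (intro sum.mono_neutral_right) auto
  then show ?thesis by simp
qed

definition LAP :: "nat \<Rightarrow> (nat \<Rightarrow> real) \<Rightarrow> nat \<Rightarrow> real" where
  "LAP N x k = (if k \<in> {1..N-1} then (x (k-1) + x (k+1)) / 2 - x k else 0)"

lemma sumDt:
  assumes N: "N \<ge> 2"
  shows "(\<Sum>m\<in>{0..<N}. Dt N m (Suc m) k x) = LAP N x k"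
proof (cases "k \<in> {1..N-1}")
  case True
  have "(\<Sum>m\<in>{0..<N}. Dt N m (Suc m) k x) = Dt N (k-1) (Suc (k-1)) k x + Dt N k (Suc k) k x"
    by (rule sum2) (use True in \<open>auto simp: Dt_def updv_def\<close>)
  also have "\<dots> = LAP N x k"
    using True unfolding Dt_def updv_def LAP_def internal_vertices_def by (auto simp: field_simps)
  finally show ?thesis .
next
  case False
  then show ?thesis unfolding Dt_def updv_def LAP_def internal_vertices_def by auto
qed

definition CS :: "(nat \<Rightarrow> real) \<Rightarrow> nat \<Rightarrow> nat \<Rightarrow> real" where
  "CS x k l = (if l = k then (x (k-1) - x k)^2 / 3 + (x k - x (k+1))^2 / 3
     else if l = k + 1 then - ((x k - x l)^2) / 6 else 0)"

lemma sumCt: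
  assumes N: "N \<ge> 2" and kl: "1 \<le> k" "k \<le> l" "l \<le> N - 1"
  shows "(\<Sum>m\<in>{0..<N}. Ct N m (Suc m) k l x) = CS x k l"
proof -
  consider "l = k" | "l = k + 1" | "l \<noteq> k \<and> l \<noteq> k + 1" by blast
  then show ?thesis
  proof cases
    case 1
    have "(\<Sum>m\<in>{0..<N}. Ct N m (Suc m) k l x) = Ct N (k-1) (Suc (k-1)) k l x + Ct N k (Suc k) k l x"
      by (rule sum2) (use 1 kl in \<open>auto simp: Ct_def updv_def\<close>)
    also have "\<dots> = CS x k l"
      using 1 kl unfolding Ct_def updv_def CS_def internal_vertices_def by auto
    finally show ?thesis .
  next
    case 2
    have "(\<Sum>m\<in>{0..<N}. Ct N m (Suc m) k l x) = Ct N k (Suc k) k l x"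
      by (rule sum1) (use 2 kl in \<open>auto simp: Ct_def updv_def\<close>)
    also have "\<dots> = CS x k l"
      using 2 kl unfolding Ct_def updv_def CS_def internal_vertices_def by auto
    finally show ?thesis .
  next
    case 3
    have "Ct N m (Suc m) k l x = 0" for m using 3 kl unfolding Ct_def updv_def by auto
    then show ?thesis using 3 unfolding CS_def by simp
  qed
qed

lemma sumCt0: "(\<Sum>m\<in>{0..<N}. Ct N m (Suc m) k 0 x) = 0"
  unfolding Ct_def updv_def internal_vertices_def by simp

lemma Aterm_sum:
  assumes N: "N \<ge> 2"
  shows "(\<Sum>(i, j)\<in>opinion_edges N. Aterm N i j k l x) =
     x l * LAP N x k + x k * LAP N x l + (\<Sum>m\<in>{0..<N}. Ct N m (Suc m) k l x)"
proof -
  have sym: "Aterm N 1 0 k l x = Aterm N 0 1 k l x"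
  proof -
    have u: "\<And>m. updv N 1 0 m = updv N 0 1 m" unfolding updv_def by auto
    have d: "\<And>m. Dt N 1 0 m x = Dt N 0 1 m x" unfolding Dt_def u by (simp add: add.commute)
    have c: "Ct N 1 0 k l x = Ct N 0 1 k l x" unfolding Ct_def u by (simp add: power2_commute)
    show ?thesis unfolding Aterm_def d c ..
  qed
  have "(\<Sum>(i, j)\<in>opinion_edges N. Aterm N i j k l x) = (\<Sum>m\<in>{0..<N}. Aterm N m (Suc m) k l x)"
    by (rule edges_sum[OF N]) (rule sym)
  also have "\<dots> = x l * (\<Sum>m\<in>{0..<N}. Dt N m (Suc m) k x) + x k * (\<Sum>m\<in>{0..<N}. Dt N m (Suc m) l x)
       + (\<Sum>m\<in>{0..<N}. Ct N m (Suc m) k l x)"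
    unfolding Aterm_def by (simp add: sum.distrib sum_distrib_left)
  finally show ?thesis using sumDt[OF N] by simp
qed


lemma lin_means:
  fixes m :: "nat \<Rightarrow> real"
  assumes N: "N \<ge> 1" and m0: "m 0 = Tm" and mN: "m N = Tp"
    and eq: "\<And>k. 1 \<le> k \<Longrightarrow> k \<le> N - 1 \<Longrightarrow> (m (k-1) + m (k+1)) / 2 - m k = 0"
    and a: "a \<le> N"
  shows "m a = mG N Tm Tp a"
proof -
  define d where "d = m 1 - m 0"
  have claim: "a \<le> N \<longrightarrow> m a = Tm + real a * d \<and> (a + 1 \<le> N \<longrightarrow> m (a+1) = Tm + real (a+1) * d)" for a
  proof (induction a)
    case 0 then show ?case using m0 d_def by simp
  next
    case (Suc a)
    show ?case
    proof
      assume a1: "Suc a \<le> N"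
      have h1: "m (Suc a) = Tm + real (Suc a) * d" using Suc a1 by simp
      have "Suc a + 1 \<le> N \<longrightarrow> m (Suc a + 1) = Tm + real (Suc a + 1) * d"
      proof
        assume a2: "Suc a + 1 \<le> N"
        have ma: "m a = Tm + real a * d" using Suc a1 by simp
        have "(m (Suc a - 1) + m (Suc a + 1)) / 2 - m (Suc a) = 0" using eq[of "Suc a"] a2 by simp
        then have "m (Suc a + 1) = 2 * m (Suc a) - m a" by simp
        then show "m (Suc a + 1) = Tm + real (Suc a + 1) * d" using h1 ma by (simp add: algebra_simps)
      qed
      then show "m (Suc a) = Tm + real (Suc a) * d \<and> (Suc a + 1 \<le> N \<longrightarrow> m (Suc a + 1) = Tm + real (Suc a + 1) * d)"
        using h1 by simp
    qed
  qed
  have "Tp = Tm + real N * d" using claim[of N] mN by simp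
  then have "d = (Tp - Tm) / real N" using N by (simp add: field_simps)
  then show ?thesis using claim[of a] a unfolding mG_def by simp
qed

lemma Eop_prod_form:
  assumes "1 \<le> k" "k \<le> l"
  shows "x l * LAP N x k + x k * LAP N x l + CS x k l = Eop (\<lambda>a b. x a * x b) k l \<or> \<not> (l \<le> N - 1)"
proof (cases "l \<le> N - 1")
  case True
  have k: "k \<in> {1..N-1}" "l \<in> {1..N-1}" using assms True by auto
  then show ?thesis unfolding LAP_def CS_def Eop_def
    by (simp add: power2_eq_square field_simps)
qed simp

context opn
begin

definition fq where "fq k l = (\<lambda>y. clip hi (y k) * clip hi (y l))"

lemma coord_meas: "a \<le> N \<Longrightarrow> (\<lambda>x. x a) \<in> borel_measurable (opinion_space N)"
  unfolding opinion_space_def by (intro measurable_component_singleton) auto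

lemma coord_meas_nu: "a \<le> N \<Longrightarrow> (\<lambda>x. x a) \<in> borel_measurable \<nu>"
  unfolding meas_eq by (rule coord_meas)

lemma fq_meas: "k \<le> N \<Longrightarrow> l \<le> N \<Longrightarrow> fq k l \<in> borel_measurable (opinion_space N)"
proof -
  assume k: "k \<le> N" and l: "l \<le> N"
  have c: "clip hi \<in> borel_measurable borel" unfolding clip_def by measurable
  show ?thesis unfolding fq_def
    by (intro borel_measurable_times measurable_compose[OF _ c] coord_meas k l)
qed

lemma fq_bound: "\<bar>fq k l x\<bar> \<le> hi * hi"
proof -
  have "\<bar>clip hi t\<bar> \<le> hi" for t unfolding clip_def using hi_ge by auto
  then show ?thesis unfolding fq_def abs_mult using hi_ge(3) by (intro mult_mono) auto
qed

lemma gen_fq: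
  assumes x: "x \<in> Bx" and k: "k \<le> N" and l: "l \<le> N"
  shows "opinion_generator N (fq k l) x = x l * LAP N x k + x k * LAP N x l + (\<Sum>m\<in>{0..<N}. Ct N m (Suc m) k l x)"
proof -
  have xr: "\<And>m. m \<le> N \<Longrightarrow> 0 \<le> x m \<and> x m \<le> hi" using x unfolding Bx_def by auto
  have "opinion_generator N (fq k l) x = (\<Sum>(i, j)\<in>opinion_edges N. Aterm N i j k l x)"
    unfolding opinion_generator_def
  proof (rule sum.cong)
    fix e assume "e \<in> opinion_edges N"
    then obtain i j where e: "e = (i, j)" "(i, j) \<in> opinion_edges N" by (cases e) auto
    show "(case e of (i, j) \<Rightarrow> LINT v:{0..1}|lborel. fq k l (opinion_update N i j v x) - fq k l x) =
          (case e of (i, j) \<Rightarrow> Aterm N i j k l x)"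
      unfolding e(1) fq_def using edge_formula[OF e(2) N2 k l xr] by simp
  qed simp
  then show ?thesis using Aterm_sum[OF N2] by simp
qed

lemma int_prod: "a \<le> N \<Longrightarrow> b \<le> N \<Longrightarrow> integrable \<nu> (\<lambda>x. x a * x b)"
proof -
  assume a: "a \<le> N" and b: "b \<le> N"
  interpret prob_space \<nu> by (rule prob)
  show ?thesis
  proof (rule integrable_const_bound)
    show "AE x in \<nu>. norm (x a * x b) \<le> hi * hi"
      using AE_box by eventually_elim (use a b in \<open>auto simp: Bx_def abs_mult intro!: mult_mono\<close>)
    show "(\<lambda>x. x a * x b) \<in> borel_measurable \<nu>"
      using coord_meas_nu[OF a] coord_meas_nu[OF b] by (rule borel_measurable_times)
  qed
qed

lemma int_coord: "a \<le> N \<Longrightarrow> integrable \<nu> (\<lambda>x. x a)"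
proof -
  assume a: "a \<le> N"
  interpret prob_space \<nu> by (rule prob)
  show ?thesis
  proof (rule integrable_const_bound)
    show "AE x in \<nu>. norm (x a) \<le> hi"
      using AE_box by eventually_elim (use a in \<open>auto simp: Bx_def\<close>)
    show "(\<lambda>x. x a) \<in> borel_measurable \<nu>" using coord_meas_nu[OF a] .
  qed
qed

end


context opn
begin

lemma Eop_prod_meas:
  assumes kl: "1 \<le> k" "k \<le> l" "l \<le> N - 1"
  shows "(\<lambda>x. Eop (\<lambda>a b. x a * x b) k l) \<in> borel_measurable \<nu>"
proof -
  note [measurable] = coord_meas_nu[of "k-1"] coord_meas_nu[of k] coord_meas_nu[of "k+1"]
    coord_meas_nu[of "l-1"] coord_meas_nu[of l] coord_meas_nu[of "l+1"]
  have idx: "k - 1 \<le> N" "k \<le> N" "k + 1 \<le> N" "l - 1 \<le> N" "l \<le> N" "l + 1 \<le> N" using kl N2 by auto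
  show ?thesis unfolding Eop_def using idx by measurable
qed

lemma int_Eop:
  assumes kl: "1 \<le> k" "k \<le> l" "l \<le> N - 1"
  shows "(\<integral>x. Eop (\<lambda>a b. x a * x b) k l \<partial>\<nu>) = Eop (\<lambda>a b. \<integral>x. x a * x b \<partial>\<nu>) k l"
proof -
  have idx: "k - 1 \<le> N" "k \<le> N" "k + 1 \<le> N" "l - 1 \<le> N" "l \<le> N" "l + 1 \<le> N" using kl N2 by auto
  note ints = int_prod[OF idx(1) idx(1)] int_prod[OF idx(1) idx(2)] int_prod[OF idx(2) idx(2)]
    int_prod[OF idx(2) idx(3)] int_prod[OF idx(3) idx(3)]
    int_prod[OF idx(5) idx(1)] int_prod[OF idx(5) idx(3)] int_prod[OF idx(5) idx(2)]
    int_prod[OF idx(2) idx(4)] int_prod[OF idx(2) idx(6)] int_prod[OF idx(2) idx(5)]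
    int_prod[OF idx(5) idx(5)]
  consider "l = k" | "l = k + 1" | "l \<noteq> k \<and> l \<noteq> k + 1" by blast
  then show ?thesis
  proof cases
    case 1 then show ?thesis unfolding Eop_def using ints by simp
  next
    case 2
    have c: "(\<integral>x. x k * x (Suc k) \<partial>\<nu>) = (\<integral>x. x (Suc k) * x k \<partial>\<nu>)" by (simp add: mult.commute)
    from 2 show ?thesis unfolding Eop_def using ints c by simp
  next
    case 3
    have c: "(\<integral>x. x k * x l \<partial>\<nu>) = (\<integral>x. x l * x k \<partial>\<nu>)" by (simp add: mult.commute)
    from 3 show ?thesis unfolding Eop_def using ints c by simp
  qed
qed

lemma second_moment:
  assumes kl: "1 \<le> k" "k \<le> l" "l \<le> N - 1"
  shows "Eop (\<lambda>a b. \<integral>x. x a * x b \<partial>\<nu>) k l = 0"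
proof -
  have kN: "k \<le> N" "l \<le> N" using kl by auto
  have "(\<integral>x. opinion_generator N (fq k l) x \<partial>\<nu>) = 0"
    by (rule invar[OF fq_meas[OF kN] fq_bound])
  moreover have "(\<integral>x. opinion_generator N (fq k l) x \<partial>\<nu>) = (\<integral>x. Eop (\<lambda>a b. x a * x b) k l \<partial>\<nu>)"
  proof (rule integral_cong_AE)
    show "opinion_generator N (fq k l) \<in> borel_measurable \<nu>"
      unfolding meas_eq using gen_meas[OF fq_meas[OF kN]] N2 by simp
    show "(\<lambda>x. Eop (\<lambda>a b. x a * x b) k l) \<in> borel_measurable \<nu>" by (rule Eop_prod_meas[OF kl])
    show "AE x in \<nu>. opinion_generator N (fq k l) x = Eop (\<lambda>a b. x a * x b) k l"
      using AE_box
    proof eventually_elim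
      case (elim x)
      then show ?case using gen_fq[of x k l] kN sumCt[OF N2 kl, of x] Eop_prod_form[OF kl(1,2), of x N] kl
        by simp
    qed
  qed
  ultimately show ?thesis using int_Eop[OF kl] by simp
qed

lemma first_moment:
  assumes k: "1 \<le> k" "k \<le> N - 1"
  shows "((\<integral>x. x (k-1) \<partial>\<nu>) + (\<integral>x. x (k+1) \<partial>\<nu>)) / 2 - (\<integral>x. x k \<partial>\<nu>) = 0"
proof -
  have kN: "k \<le> N" "0 \<le> N" using k by auto
  have idx: "k - 1 \<le> N" "k + 1 \<le> N" using k N2 by auto
  have "(\<integral>x. opinion_generator N (fq k 0) x \<partial>\<nu>) = 0"
    by (rule invar[OF fq_meas[OF kN] fq_bound])
  moreover have "(\<integral>x. opinion_generator N (fq k 0) x \<partial>\<nu>) = (\<integral>x. Tm * ((x (k-1) + x (k+1)) / 2 - x k) \<partial>\<nu>)"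
  proof (rule integral_cong_AE)
    show "opinion_generator N (fq k 0) \<in> borel_measurable \<nu>"
      unfolding meas_eq using gen_meas[OF fq_meas[OF kN]] N2 by simp
    show "(\<lambda>x. Tm * ((x (k-1) + x (k+1)) / 2 - x k)) \<in> borel_measurable \<nu>"
      using coord_meas_nu[OF idx(1)] coord_meas_nu[OF idx(2)] coord_meas_nu[OF kN(1)] by measurable
    show "AE x in \<nu>. opinion_generator N (fq k 0) x = Tm * ((x (k-1) + x (k+1)) / 2 - x k)"
      using AE_box
    proof eventually_elim
      case (elim x)
      then have "x 0 = Tm" unfolding Bx_def by simp
      then show ?case using gen_fq[of x k 0] elim kN sumCt0[of N k x] k
        unfolding LAP_def by simp
    qed
  qed
  ultimately have "Tm * (((\<integral>x. x (k-1) \<partial>\<nu>) + (\<integral>x. x (k+1) \<partial>\<nu>)) / 2 - (\<integral>x. x k \<partial>\<nu>)) = 0"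
    using int_coord[OF idx(1)] int_coord[OF idx(2)] int_coord[OF kN(1)] by simp
  then show ?thesis using Tm by simp
qed

lemma bdry_coord:
  "(\<integral>x. x 0 \<partial>\<nu>) = Tm" "(\<integral>x. x N \<partial>\<nu>) = Tp"
proof -
  interpret prob_space \<nu> by (rule prob)
  have "(\<integral>x. x 0 \<partial>\<nu>) = (\<integral>x. Tm \<partial>\<nu>)"
    by (rule integral_cong_AE) (use coord_meas_nu[of 0] AEbd in auto)
  then show "(\<integral>x. x 0 \<partial>\<nu>) = Tm" by (simp add: prob_space)
  have "(\<integral>x. x N \<partial>\<nu>) = (\<integral>x. Tp \<partial>\<nu>)"
    by (rule integral_cong_AE) (use coord_meas_nu[of N] AEbd in auto)
  then show "(\<integral>x. x N \<partial>\<nu>) = Tp" by (simp add: prob_space)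
qed

lemma bdry_prod:
  assumes b: "b \<le> N"
  shows "(\<integral>x. x 0 * x b \<partial>\<nu>) = Tm * (\<integral>x. x b \<partial>\<nu>)" "(\<integral>x. x N * x b \<partial>\<nu>) = Tp * (\<integral>x. x b \<partial>\<nu>)"
proof -
  have m0: "(\<lambda>x. x 0 * x b) \<in> borel_measurable \<nu>" "(\<lambda>x. x N * x b) \<in> borel_measurable \<nu>"
    using coord_meas_nu[of 0] coord_meas_nu[of N] coord_meas_nu[OF b] by auto
  have "(\<integral>x. x 0 * x b \<partial>\<nu>) = (\<integral>x. Tm * x b \<partial>\<nu>)"
    by (rule integral_cong_AE) (use m0 coord_meas_nu[OF b] AEbd in auto)
  then show "(\<integral>x. x 0 * x b \<partial>\<nu>) = Tm * (\<integral>x. x b \<partial>\<nu>)" by simp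
  have "(\<integral>x. x N * x b \<partial>\<nu>) = (\<integral>x. Tp * x b \<partial>\<nu>)"
    by (rule integral_cong_AE) (use m0 coord_meas_nu[OF b] AEbd in auto)
  then show "(\<integral>x. x N * x b \<partial>\<nu>) = Tp * (\<integral>x. x b \<partial>\<nu>)" by simp
qed

lemma main:
  assumes kl: "k \<le> l" "l \<le> N"
  shows "opinion_cov \<nu> k l \<le> C_tilde N Tm Tp k l"
proof -
  define m where "m a = (\<integral>x. x a \<partial>\<nu>)" for a
  define S where "S a b = (\<integral>x. x a * x b \<partial>\<nu>)" for a b
  have N1: "N \<ge> 1" using N2 by simp
  have mG: "m a = mG N Tm Tp a" if "a \<le> N" for a
  proof (rule lin_means[OF N1 _ _ _ that])
    show "m 0 = Tm" "m N = Tp" unfolding m_def using bdry_coord by auto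
    show "(m (k - 1) + m (k + 1)) / 2 - m k = 0" if "1 \<le> k" "k \<le> N - 1" for k
      unfolding m_def using first_moment[OF that] .
  qed
  have "S k l - m k * m l \<le> C_tilde N Tm Tp k l"
  proof (rule partB[OF N1 mG _ _ _ _ kl])
    show "S a b = S b a" for a b unfolding S_def by (simp add: mult.commute)
    show "S 0 b = Tm * m b" if "b \<le> N" for b unfolding S_def m_def using bdry_prod[OF that] by simp
    show "S N b = Tp * m b" if "b \<le> N" for b unfolding S_def m_def using bdry_prod[OF that] by simp
    show "Eop S k l = 0" if "1 \<le> k" "k \<le> l" "l \<le> N - 1" for k l
      unfolding S_def using second_moment[OF that] .
  qed
  then show ?thesis unfolding opinion_cov_def S_def m_def .
qed

end


theorem proposition2p7:
  fixes N :: nat and Tm Tp :: real and \<nu> :: "(nat \<Rightarrow> real) measure" and k l :: nat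
  assumes "N \<ge> 2" and "Tm > 0" and "Tp > 0"
    and "opinion_invariant N Tm Tp \<nu>"
    and "k \<le> l" and "l \<le> N"
  shows "opinion_cov \<nu> k l \<le> C_tilde N Tm Tp k l"
proof -
  interpret opn N Tm Tp \<nu> by unfold_locales (use assms in auto)
  show ?thesis using main assms(5,6) by blast
qed

end
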